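(* Under the hypotheses and notation of Theorem 1 (synchronous HSAG with the stated $\gamma,\theta$, conditions $\frac1\kappa+2Lc\eta^2(1+\frac1\beta)\le\frac1n$, $\gamma>0$, $\theta<1$, and $p_j\propto(1-\frac1\kappa)^{m-j}$), suppose moreover that $\bar\theta:=\theta(1+1/\gamma)<1$. Then for all $k\ge 0$, $$\mathbb{E}\big[f(\tilde x^{k})-f(x^* )\big]\le\bar\theta^{\,k}\,\big[f(x^0)-f(x^* )\big].$$
   Context: Setting: $f_1,\dots,f_n:\mathbb{R}^d\to\mathbb{R}$ convex, differentiable, each with $L$-Lipschitz gradient; $f=\frac1n\sum_i f_i$ is $\lambda$-strongly convex with minimizer $x^*$; $S\subseteq[n]$; $c>0,\beta>0,\kappa>1$, $\eta>0$, $m\ge1$; $\gamma=\kappa[1-(1-\frac1\kappa)^m](2c\eta(1-L\eta(1+\beta))-\frac1n-\frac{2c}{\kappa\lambda})$ and $\theta=\max\{\frac{2c}{\gamma\lambda}(1-\frac1\kappa)^m+\frac{2Lc\eta^2}{\gamma}(1+\frac1\beta)\kappa[1-(1-\frac1\kappa)^m],\ (1-\frac1\kappa)^m\}$. Synchronous HSAG algorithm: $x^0\in\mathbb{R}^d$, $\tilde x^0=x^0$, $\alpha_i^0=x^0$. Epoch $k+1$ consists of steps $t=km,\dots,km+m-1$ with $x^{km}=\tilde x^k$. At step $t$, $i_t$ is uniform on $[n]$ independent of the past and $x^{t+1}=x^t-\eta(\nabla f_{i_t}(x^t)-\nabla f_{i_t}(\alpha_{i_t}^t)+\frac1n\sum_i\nabla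 f_i(\alpha_i^t))$. For $i\in S$: $\alpha_i^{t+1}=x^t$ if $i_t=i$, else $\alpha_i^{t+1}=\alpha_i^t$; for $i\notin S$: $\alpha_i^t=\tilde x^k$ throughout epoch $k+1$. At epoch end, $\tilde x^{k+1}$ is chosen from $\{x^{km},\dots,x^{km+m-1}\}$, picking $x^{km+j-1}$ with probability $p_j$, and $x^{(k+1)m}:=\tilde x^{k+1}$. *)

theory Defs
  imports "HOL-Analysis.Analysis" "HOL-Probability.Probability"
begin

definition strongly_convex :: "real \<Rightarrow> ('a::real_normed_vector \<Rightarrow> real) \<Rightarrow> bool" where
  "strongly_convex lam F \<longleftrightarrow>
     (\<forall>x y t. 0 \<le> t \<and> t \<le> 1 \<longrightarrow>
        F ((1 - t) *\<^sub>R x + t *\<^sub>R y) \<le> (1 - t) * F x + t * F y - lam / 2 * t * (1 - t) * (norm (x - y))\<^sup>2)"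

text \<open>One HSAG inner step with chosen component i: returns (x^{t+1}, alpha^{t+1}).
  g i is the gradient of f_i; components are indexed by {..<n}.\<close>
definition hsag_update ::
  "nat \<Rightarrow> (nat \<Rightarrow> 'a::real_inner \<Rightarrow> 'a) \<Rightarrow> nat set \<Rightarrow> real \<Rightarrow> nat \<Rightarrow> 'a \<Rightarrow> (nat \<Rightarrow> 'a) \<Rightarrow> 'a \<times> (nat \<Rightarrow> 'a)" where
  "hsag_update n g S \<eta> i x \<alpha> =
     (x - \<eta> *\<^sub>R (g i x - g i (\<alpha> i) + (1 / real n) *\<^sub>R (\<Sum>j<n. g j (\<alpha> j))),
      (if i \<in> S then \<alpha>(i := x) else \<alpha>))"

text \<open>Run r inner steps from (x, alpha); returns the distribution of
  (list of visited iterates [x^t, ..., x^{t+r-1}], final alpha).\<close>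
fun hsag_run ::
  "nat \<Rightarrow> (nat \<Rightarrow> 'a::real_inner \<Rightarrow> 'a) \<Rightarrow> nat set \<Rightarrow> real \<Rightarrow> nat \<Rightarrow> 'a \<Rightarrow> (nat \<Rightarrow> 'a) \<Rightarrow> ('a list \<times> (nat \<Rightarrow> 'a)) pmf" where
  "hsag_run n g S \<eta> 0 x \<alpha> = return_pmf ([], \<alpha>)"
| "hsag_run n g S \<eta> (Suc r) x \<alpha> =
     bind_pmf (pmf_of_set {..<n}) (\<lambda>i.
       case hsag_update n g S \<eta> i x \<alpha> of (x', \<alpha>') \<Rightarrow>
         map_pmf (\<lambda>(xs, \<alpha>''). (x # xs, \<alpha>'')) (hsag_run n g S \<eta> r x' \<alpha>'))"

text \<open>One epoch: state (x-tilde^k, alpha) where alpha stores the table entries of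
  indices in S (entries outside S are reset to x-tilde^k). The snapshot
  x-tilde^{k+1} is x^{km+j-1} with j drawn from the pmf p on {1..m}.\<close>
definition hsag_epoch ::
  "nat \<Rightarrow> (nat \<Rightarrow> 'a::real_inner \<Rightarrow> 'a) \<Rightarrow> nat set \<Rightarrow> real \<Rightarrow> nat \<Rightarrow> nat pmf \<Rightarrow> 'a \<times> (nat \<Rightarrow> 'a) \<Rightarrow> ('a \<times> (nat \<Rightarrow> 'a)) pmf" where
  "hsag_epoch n g S \<eta> m p st =
     (case st of (xt, \<alpha>) \<Rightarrow>
       bind_pmf (hsag_run n g S \<eta> m xt (\<lambda>i. if i \<in> S then \<alpha> i else xt)) (\<lambda>(xs, \<alpha>').
         map_pmf (\<lambda>j. (xs ! (j - 1), \<alpha>')) p))"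

definition hsag_state ::
  "nat \<Rightarrow> (nat \<Rightarrow> 'a::real_inner \<Rightarrow> 'a) \<Rightarrow> nat set \<Rightarrow> real \<Rightarrow> nat \<Rightarrow> nat pmf \<Rightarrow> 'a \<Rightarrow> nat \<Rightarrow> ('a \<times> (nat \<Rightarrow> 'a)) pmf" where
  "hsag_state n g S \<eta> m p x0 k =
     ((\<lambda>D. bind_pmf D (hsag_epoch n g S \<eta> m p)) ^^ k) (return_pmf (x0, \<lambda>_. x0))"

end

theory Submission
  imports Defs
begin


lemma line_deriv:
  fixes F :: "'a::real_inner \<Rightarrow> real"
  assumes "\<And>z. (F has_derivative (\<lambda>h. G z \<bullet> h)) (at z)"
  shows "((\<lambda>t. F (x + t *\<^sub>R d)) has_real_derivative (G (x + t *\<^sub>R d) \<bullet> d)) (at t)"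
proof -
  have 1: "((\<lambda>t. x + t *\<^sub>R d) has_derivative (\<lambda>h. h *\<^sub>R d)) (at t)"
    by (auto intro!: derivative_eq_intros)
  have "((\<lambda>t. F (x + t *\<^sub>R d)) has_derivative (\<lambda>h. G (x + t *\<^sub>R d) \<bullet> (h *\<^sub>R d))) (at t)"
    using has_derivative_compose[OF 1 assms[of "x + t *\<^sub>R d"]] by (simp add: o_def)
  then show ?thesis unfolding has_field_derivative_def
    by (rule has_derivative_eq_rhs) (auto simp: fun_eq_iff)
qed

lemma grad_ineq_gen:
  fixes F :: "'a::real_inner \<Rightarrow> real"
  assumes cv: "convex_on UNIV F" and d: "\<And>z. (F has_derivative (\<lambda>h. G z \<bullet> h)) (at z)"
  shows "F y \<ge> F x + G x \<bullet> (y - x)"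
proof -
  let ?phi = "\<lambda>t. F (x + t *\<^sub>R (y - x))"
  have cphi: "convex_on UNIV ?phi"
  proof (rule convex_onI)
    fix u s t :: real assume u: "0 < u" "u < 1"
    have e: "x + ((1 - u) *\<^sub>R s + u *\<^sub>R t) *\<^sub>R (y - x) = (1 - u) *\<^sub>R (x + s *\<^sub>R (y - x)) + u *\<^sub>R (x + t *\<^sub>R (y - x))"
      by (simp add: algebra_simps)
    show "?phi ((1 - u) *\<^sub>R s + u *\<^sub>R t) \<le> (1 - u) * ?phi s + u * ?phi t"
      unfolding e using convex_onD[OF cv, of u] u by auto
  qed simp
  have dd: "(?phi has_real_derivative (G x \<bullet> (y - x))) (at 0)"
    using line_deriv[OF d, of x "y - x" 0] by simp
  have "?phi 1 - ?phi 0 \<ge> (G x \<bullet> (y - x)) * (1 - 0)"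
    by (rule convex_on_imp_above_tangent[OF cphi]) (use dd in auto)
  then show ?thesis by simp
qed

lemma descent_gen:
  fixes F :: "'a::real_inner \<Rightarrow> real"
  assumes d: "\<And>z. (F has_derivative (\<lambda>h. G z \<bullet> h)) (at z)"
    and lip: "\<And>u v. norm (G u - G v) \<le> L * norm (u - v)"
  shows "F y \<le> F x + G x \<bullet> (y - x) + L / 2 * (norm (y - x))\<^sup>2"
proof -
  let ?d = "y - x"
  let ?psi = "\<lambda>t. F (x + t *\<^sub>R ?d) - t * (G x \<bullet> ?d) - L / 2 * t\<^sup>2 * (norm ?d)\<^sup>2"
  have "?psi 0 \<ge> ?psi 1"
  proof (rule DERIV_nonpos_imp_nonincreasing[where f = ?psi])
    fix t :: real assume t: "0 \<le> t" "t \<le> 1"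
    have D: "(?psi has_real_derivative (G (x + t *\<^sub>R ?d) \<bullet> ?d - G x \<bullet> ?d - L / 2 * (2 * t) * (norm ?d)\<^sup>2)) (at t)"
    proof -
      have a: "((\<lambda>t. t * (G x \<bullet> ?d)) has_real_derivative (G x \<bullet> ?d)) (at t)"
        by (auto intro!: derivative_eq_intros)
      have b: "((\<lambda>t. L / 2 * t\<^sup>2 * (norm ?d)\<^sup>2) has_real_derivative (L / 2 * (2 * t) * (norm ?d)\<^sup>2)) (at t)"
        by (auto intro!: derivative_eq_intros)
      note X = DERIV_diff[OF DERIV_diff[OF line_deriv[OF d, of x "y - x" t] a] b] thm X show ?thesis using X by simp
    qed
    have "G (x + t *\<^sub>R ?d) \<bullet> ?d - G x \<bullet> ?d = (G (x + t *\<^sub>R ?d) - G x) \<bullet> ?d"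
      by (simp add: inner_diff_left)
    also have "\<dots> \<le> norm (G (x + t *\<^sub>R ?d) - G x) * norm ?d"
      by (rule norm_cauchy_schwarz)
    also have "\<dots> \<le> (L * norm (t *\<^sub>R ?d)) * norm ?d"
      using lip[of "x + t *\<^sub>R ?d" x] by (intro mult_right_mono) auto
    also have "\<dots> = L / 2 * (2 * t) * (norm ?d)\<^sup>2"
      using t by (simp add: power2_eq_square)
    finally show "\<exists>y. (?psi has_real_derivative y) (at t) \<and> y \<le> 0"
      using D by (intro exI[of _ "G (x + t *\<^sub>R ?d) \<bullet> ?d - G x \<bullet> ?d - L / 2 * (2 * t) * (norm ?d)\<^sup>2"]) auto
  qed simp
  then show ?thesis by simp
qed




locale hs =
  fixes f :: "nat \<Rightarrow> 'a::euclidean_space \<Rightarrow> real"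
    and g :: "nat \<Rightarrow> 'a \<Rightarrow> 'a"
    and n :: nat and S :: "nat set"
    and L lam :: real and xstar :: 'a
  assumes n_pos: "n \<ge> 1"
    and S_sub: "S \<subseteq> {..<n}"
    and conv: "\<And>i. i < n \<Longrightarrow> convex_on UNIV (f i)"
    and grad: "\<And>i x. i < n \<Longrightarrow> (f i has_derivative (\<lambda>h. g i x \<bullet> h)) (at x)"
    and lip: "\<And>i x y. i < n \<Longrightarrow> norm (g i x - g i y) \<le> L * norm (x - y)"
    and lam_pos: "lam > 0"
    and sc: "strongly_convex lam (\<lambda>x. (1 / real n) * (\<Sum>i<n. f i x))"
    and opt: "\<And>y. (1 / real n) * (\<Sum>i<n. f i xstar) \<le> (1 / real n) * (\<Sum>i<n. f i y)"
begin

definition F where "F x = (1 / real n) * (\<Sum>i<n. f i x)"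
definition h where "h i y = f i y - f i xstar - g i xstar \<bullet> (y - xstar)"
definition HS where "HS \<alpha> = (1 / real n) * (\<Sum>i\<in>S. h i (\<alpha> i))"
definition HN where "HN y = (1 / real n) * (\<Sum>i\<in>{..<n} - S. h i y)"

lemma n_gt: "real n > 0" using n_pos by simp

lemma L_nonneg: "L \<ge> 0"
proof -
  obtain b :: 'a where b: "b \<in> Basis" using nonempty_Basis by blast
  have "norm (g 0 b - g 0 0) \<le> L * norm (b - 0)" using lip[of 0 b 0] n_pos by simp
  moreover have "norm b = 1" using b by simp
  ultimately show ?thesis by (metis diff_zero mult.right_neutral norm_ge_zero order_trans)
qed

lemma gi: "i < n \<Longrightarrow> f i y \<ge> f i x + g i x \<bullet> (y - x)"
  by (rule grad_ineq_gen[OF conv grad])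

lemma h_nonneg: "i < n \<Longrightarrow> h i y \<ge> 0"
  using gi[of i xstar y] unfolding h_def by simp

lemma coco: assumes i: "i < n" shows "(norm (g i y - g i xstar))\<^sup>2 \<le> 2 * L * h i y"
proof (cases "L = 0")
  case True
  then have "g i y = g i xstar" using lip[OF i, of y xstar] by simp
  then show ?thesis using h_nonneg[OF i, of y] True by simp
next
  case False
  then have Lp: "L > 0" using L_nonneg by simp
  define phi where "phi z = f i z - g i xstar \<bullet> z" for z
  define G where "G z = g i z - g i xstar" for z
  have d: "(phi has_derivative (\<lambda>h. G z \<bullet> h)) (at z)" for z
  proof -
    have "((\<lambda>z. f i z - g i xstar \<bullet> z) has_derivative (\<lambda>h. g i z \<bullet> h - g i xstar \<bullet> h)) (at z)"
      by (intro has_derivative_diff grad[OF i] bounded_linear_imp_has_derivative bounded_linear_inner_right)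
    then show ?thesis unfolding phi_def G_def by (simp add: inner_diff_left)
  qed
  have lG: "norm (G u - G v) \<le> L * norm (u - v)" for u v
    unfolding G_def using lip[OF i, of u v] by simp
  define y' where "y' = y - (1 / L) *\<^sub>R G y"
  have "phi y' \<le> phi y + G y \<bullet> (y' - y) + L / 2 * (norm (y' - y))\<^sup>2"
    by (rule descent_gen[OF d lG])
  also have "\<dots> = phi y - (norm (G y))\<^sup>2 / (2 * L)"
  proof -
    have nn: "G y \<bullet> G y = (norm (G y))\<^sup>2" by (simp add: power2_norm_eq_inner)
    have "G y \<bullet> (y' - y) = - (1 / L) * (norm (G y))\<^sup>2" unfolding y'_def by (simp add: nn)
    moreover have "(norm (y' - y))\<^sup>2 = (1 / L)\<^sup>2 * (norm (G y))\<^sup>2" unfolding y'_def using Lp by (simp add: power_divide)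
    ultimately show ?thesis using Lp by (simp add: field_simps power2_eq_square)
  qed
  finally have 1: "phi y' \<le> phi y - (norm (G y))\<^sup>2 / (2 * L)" .
  have 2: "phi xstar \<le> phi y'" using gi[OF i, of xstar y'] unfolding phi_def by (simp add: inner_diff_right)
  have "h i y = phi y - phi xstar" unfolding h_def phi_def by (simp add: inner_diff_right)
  with 1 2 have "(norm (G y))\<^sup>2 / (2 * L) \<le> h i y" by linarith
  then show ?thesis using Lp unfolding G_def by (simp add: field_simps)
qed

lemma gsum0: "(\<Sum>i<n. g i xstar) = 0"
proof -
  define Gb where "Gb z = (1 / real n) *\<^sub>R (\<Sum>i<n. g i z)" for z
  have d: "(F has_derivative (\<lambda>h. Gb z \<bullet> h)) (at z)" for z
  proof -
    have "((\<lambda>x. \<Sum>i<n. f i x) has_derivative (\<lambda>h. \<Sum>i<n. g i z \<bullet> h)) (at z)"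
      by (intro has_derivative_sum grad) auto
    then have "((\<lambda>x. (1 / real n) * (\<Sum>i<n. f i x)) has_derivative (\<lambda>h. (1 / real n) * (\<Sum>i<n. g i z \<bullet> h))) (at z)"
      by (intro has_derivative_mult_right)
    then show ?thesis unfolding F_def[abs_def] Gb_def by (simp add: inner_sum_left)
  qed
  have lG: "norm (Gb u - Gb v) \<le> L * norm (u - v)" for u v
  proof -
    have "norm (Gb u - Gb v) = (1 / real n) * norm (\<Sum>i<n. g i u - g i v)"
      unfolding Gb_def by (simp add: sum_subtractf[symmetric] scaleR_diff_right[symmetric])
    also have "\<dots> \<le> (1 / real n) * (\<Sum>i<n. L * norm (u - v))"
      by (intro mult_left_mono order_trans[OF norm_sum] sum_mono lip) auto
    also have "\<dots> = L * norm (u - v)" using n_gt by simp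
    finally show ?thesis .
  qed
  define s where "s = 1 / (L + 1)"
  have s: "s > 0" "L * s < 1" using L_nonneg unfolding s_def by (auto simp: field_simps)
  define y where "y = xstar - s *\<^sub>R Gb xstar"
  have "F y \<le> F xstar + Gb xstar \<bullet> (y - xstar) + L / 2 * (norm (y - xstar))\<^sup>2"
    by (rule descent_gen[OF d lG])
  also have "\<dots> = F xstar - s * (1 - L * s / 2) * (norm (Gb xstar))\<^sup>2"
  proof -
    have nn: "Gb xstar \<bullet> Gb xstar = (norm (Gb xstar))\<^sup>2" by (simp add: power2_norm_eq_inner)
    have "Gb xstar \<bullet> (y - xstar) = - s * (norm (Gb xstar))\<^sup>2" unfolding y_def by (simp add: nn)
    moreover have "(norm (y - xstar))\<^sup>2 = s\<^sup>2 * (norm (Gb xstar))\<^sup>2" unfolding y_def using s by (simp add: power_mult_distrib)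
    ultimately show ?thesis by (simp add: algebra_simps power2_eq_square)
  qed
  finally have "F y \<le> F xstar - s * (1 - L * s / 2) * (norm (Gb xstar))\<^sup>2" .
  moreover have "F xstar \<le> F y" using opt unfolding F_def by simp
  ultimately have "s * (1 - L * s / 2) * (norm (Gb xstar))\<^sup>2 \<le> 0" by linarith
  moreover have "s * (1 - L * s / 2) > 0" using s by (simp add: field_simps)
  ultimately have "(norm (Gb xstar))\<^sup>2 \<le> 0"
    by (metis mult_le_0_iff not_less zero_le_power2 order_antisym)
  then have "Gb xstar = 0" by simp
  then show ?thesis using n_gt unfolding Gb_def by simp
qed

lemma sum_h: "(\<Sum>i<n. h i y) = real n * (F y - F xstar)"
proof -
  have "(\<Sum>i<n. h i y) = (\<Sum>i<n. f i y) - (\<Sum>i<n. f i xstar) - (\<Sum>i<n. g i xstar) \<bullet> (y - xstar)"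
    unfolding h_def by (simp add: sum_subtractf inner_sum_left)
  then have "(\<Sum>i<n. h i y) = (\<Sum>i<n. f i y) - (\<Sum>i<n. f i xstar)" by (simp add: gsum0)
  moreover have "real n * (F y - F xstar) = (\<Sum>i<n. f i y) - (\<Sum>i<n. f i xstar)"
    unfolding F_def using n_gt by (simp add: right_diff_distrib)
  ultimately show ?thesis by simp
qed

lemma F_sc: "F y - F xstar \<ge> lam / 2 * (norm (y - xstar))\<^sup>2"
proof (rule ccontr)
  define a where "a = F y - F xstar"
  define b where "b = lam / 2 * (norm (y - xstar))\<^sup>2"
  assume "\<not> ?thesis"
  then have ab: "a < b" unfolding a_def b_def by simp
  have a0: "a \<ge> 0" unfolding a_def F_def using opt by simp
  have key: "a \<ge> b * (1 - t)" if t: "0 < t" "t \<le> 1" for t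
  proof -
    have "F ((1 - t) *\<^sub>R xstar + t *\<^sub>R y) \<le> (1 - t) * F xstar + t * F y - lam / 2 * t * (1 - t) * (norm (xstar - y))\<^sup>2"
      using sc t unfolding strongly_convex_def F_def by auto
    moreover have "F xstar \<le> F ((1 - t) *\<^sub>R xstar + t *\<^sub>R y)" using opt unfolding F_def by simp
    moreover have "norm (xstar - y) = norm (y - xstar)" by (simp add: norm_minus_commute)
    ultimately have "t * (b * (1 - t)) \<le> t * a" unfolding a_def b_def by (simp add: algebra_simps)
    then show ?thesis using t by simp
  qed
  define t where "t = (b - a) / (2 * b)"
  have bp: "b > 0" using ab a0 by simp
  have "0 < t" "t \<le> 1" unfolding t_def using ab a0 bp by (auto simp: field_simps)
  from key[OF this] have "a \<ge> b * (1 - t)" .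
  moreover have "b * (1 - t) = (a + b) / 2" unfolding t_def using bp by (simp add: field_simps)
  ultimately show False using ab by simp
qed

lemma HS_nonneg: "HS \<alpha> \<ge> 0"
  unfolding HS_def using S_sub n_gt by (intro mult_nonneg_nonneg sum_nonneg h_nonneg) auto

lemma HN_nonneg: "HN y \<ge> 0"
  unfolding HN_def using n_gt by (intro mult_nonneg_nonneg sum_nonneg h_nonneg) auto

lemma HS_HN: "HS (\<lambda>_. y) + HN y = F y - F xstar"
proof -
  have "(\<Sum>i<n. h i y) = (\<Sum>i\<in>S. h i y) + (\<Sum>i\<in>{..<n} - S. h i y)"
    using S_sub by (metis finite_lessThan sum.subset_diff add.commute)
  then show ?thesis using sum_h[of y] n_gt unfolding HS_def HN_def by (simp add: field_simps)
qed

end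


lemma step_arith:
  fixes c \<eta> L \<beta> \<kappa> lam N D V1 V2 HS HN HSx E :: real
  assumes c: "c > 0" and eta: "\<eta> > 0" and L: "L \<ge> 0" and b: "\<beta> > 0" and k: "\<kappa> > 1" and lam: "lam > 0"
    and V1: "V1 \<ge> E" and V2: "V2 \<le> 2*L*(1+\<beta>)*E + 2*L*(1+1/\<beta>)*(HS+HN)"
    and HSx: "HSx \<le> E" and D: "lam * D \<le> 2 * E" and cond: "1/\<kappa> + 2*L*c*\<eta>\<^sup>2*(1+1/\<beta>) \<le> N"
    and HS: "HS \<ge> 0" and HN: "HN \<ge> 0"
  shows "c*(D - 2*\<eta>*V1 + \<eta>\<^sup>2*V2) + (1 - N)*HS + N*HSx \<le>
     (1-1/\<kappa>)*(c*D + HS) - (2*c*\<eta>*(1 - L*\<eta>*(1+\<beta>)) - N - 2*c/(\<kappa>*lam))*E + 2*L*c*\<eta>\<^sup>2*(1+1/\<beta>)*HN"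
proof -
  have N: "N > 0" using cond k L c b by (smt (verit) divide_pos_pos mult_nonneg_nonneg zero_le_power2 less_eq_real_def)
  have a1: "c*\<eta>\<^sup>2*V2 \<le> c*\<eta>\<^sup>2*(2*L*(1+\<beta>)*E + 2*L*(1+1/\<beta>)*(HS+HN))"
    using V2 c by (intro mult_left_mono) auto
  have a2: "(2*c*\<eta>)*E \<le> (2*c*\<eta>)*V1" using V1 c eta by (intro mult_left_mono) auto
  have a3: "N*HSx \<le> N*E" using HSx N by (intro mult_left_mono) auto
  have a4: "(c/\<kappa>)*(lam*D) \<le> (c/\<kappa>)*(2*E)" using D c k by (intro mult_left_mono) auto
  have a4b: "c*D/\<kappa> \<le> 2*c*E/(\<kappa>*lam)" using a4 lam k by (simp add: field_simps)
  have a5: "(N - 1/\<kappa> - 2*L*c*\<eta>\<^sup>2*(1+1/\<beta>))*HS \<ge> 0" using cond HS by simp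
  show ?thesis using a1 a2 a3 a4b a5 unfolding power2_eq_square by (simp add: algebra_simps add_divide_distrib diff_divide_distrib)
qed

lemma norm_diff_sq: fixes a b :: "'a::real_inner"
  shows "(norm (a - b))\<^sup>2 = (norm a)\<^sup>2 - 2 * (a \<bullet> b) + (norm b)\<^sup>2"
  by (simp add: power2_norm_eq_inner inner_diff_left inner_diff_right inner_commute)

lemma young: fixes a b :: "'a::real_inner" assumes b: "\<beta> > 0"
  shows "(norm (a + b))\<^sup>2 \<le> (1 + \<beta>) * (norm a)\<^sup>2 + (1 + 1/\<beta>) * (norm b)\<^sup>2"
proof -
  have "0 \<le> (norm (\<beta> *\<^sub>R a - b))\<^sup>2 / \<beta>" using b by simp
  also have "\<dots> = \<beta> * (norm a)\<^sup>2 - 2 * (a \<bullet> b) + (norm b)\<^sup>2 / \<beta>"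
  proof -
    have "(norm (\<beta> *\<^sub>R a - b))\<^sup>2 = \<beta>\<^sup>2 * (norm a)\<^sup>2 - 2 * \<beta> * (a \<bullet> b) + (norm b)\<^sup>2"
      by (simp add: norm_diff_sq power_mult_distrib)
    then show ?thesis using b by (simp add: field_simps power2_eq_square)
  qed
  finally have 1: "2 * (a \<bullet> b) \<le> \<beta> * (norm a)\<^sup>2 + (norm b)\<^sup>2 / \<beta>" by simp
  have "(norm (a + b))\<^sup>2 = (norm a)\<^sup>2 + 2 * (a \<bullet> b) + (norm b)\<^sup>2"
    by (simp add: power2_norm_eq_inner inner_add_left inner_add_right inner_commute)
  with 1 show ?thesis by (simp add: algebra_simps add_divide_distrib)
qed

lemma variance: fixes u :: "nat \<Rightarrow> 'a::real_inner" assumes fin: "finite I" and cp: "card I > 0"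
  shows "(\<Sum>i\<in>I. (norm ((1 / real (card I)) *\<^sub>R (\<Sum>j\<in>I. u j) - u i))\<^sup>2) \<le> (\<Sum>i\<in>I. (norm (u i))\<^sup>2)"
proof -
  define N where "N = real (card I)"
  define m where "m = (1 / N) *\<^sub>R (\<Sum>j\<in>I. u j)"
  have N: "N > 0" using cp unfolding N_def by simp
  have sm: "(\<Sum>j\<in>I. u j) = N *\<^sub>R m" unfolding m_def using N by simp
  have "(\<Sum>i\<in>I. (norm (m - u i))\<^sup>2) = (\<Sum>i\<in>I. (norm m)\<^sup>2 - 2 * (m \<bullet> u i) + (norm (u i))\<^sup>2)"
    by (simp add: norm_diff_sq)
  also have "\<dots> = N * (norm m)\<^sup>2 - 2 * (m \<bullet> (\<Sum>i\<in>I. u i)) + (\<Sum>i\<in>I. (norm (u i))\<^sup>2)"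
    by (simp add: sum.distrib sum_subtractf inner_sum_right sum_distrib_left N_def)
  also have "\<dots> = (\<Sum>i\<in>I. (norm (u i))\<^sup>2) - N * (norm m)\<^sup>2"
    by (simp add: sm power2_norm_eq_inner)
  also have "\<dots> \<le> (\<Sum>i\<in>I. (norm (u i))\<^sup>2)" using N by simp
  finally show ?thesis unfolding m_def N_def .
qed




locale hs2 = hs f g n S L lam xstar
  for f :: "nat \<Rightarrow> 'a::euclidean_space \<Rightarrow> real" and g n S L lam xstar +
  fixes c \<beta> \<kappa> \<eta> :: real
  assumes c_pos: "c > 0" and beta_pos: "\<beta> > 0" and kappa_gt: "\<kappa> > 1" and eta_pos: "\<eta> > 0"
    and cond: "1/\<kappa> + 2 * L * c * \<eta>\<^sup>2 * (1 + 1/\<beta>) \<le> 1 / real n"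
begin

definition "qq = 1 - 1/\<kappa>"
definition "Bc = 2 * L * c * \<eta>\<^sup>2 * (1 + 1/\<beta>)"
definition "Ac = 2 * c * \<eta> * (1 - L * \<eta> * (1 + \<beta>)) - 1 / real n - 2 * c / (\<kappa> * lam)"
definition "Phi x \<alpha> = c * (norm (x - xstar))\<^sup>2 + HS \<alpha>"

lemma step:
  assumes inv: "\<forall>i<n. i \<notin> S \<longrightarrow> \<alpha> i = xt"
  shows "(1 / real n) * (\<Sum>i<n. (case hsag_update n g S \<eta> i x \<alpha> of (x', \<alpha>') \<Rightarrow> Phi x' \<alpha>'))
    \<le> qq * Phi x \<alpha> - Ac * (F x - F xstar) + Bc * HN xt"
proof -
  define Ga where "Ga = (1 / real n) *\<^sub>R (\<Sum>j<n. g j (\<alpha> j))"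
  define v where "v i = g i x - g i (\<alpha> i) + Ga" for i
  define d where "d = x - xstar"
  define E where "E = F x - F xstar"
  have finS: "finite S" using S_sub finite_subset by blast
  have upd: "hsag_update n g S \<eta> i x \<alpha> = (x - \<eta> *\<^sub>R v i, if i \<in> S then \<alpha>(i := x) else \<alpha>)" for i
    unfolding hsag_update_def v_def Ga_def by simp
  have xd: "x - \<eta> *\<^sub>R v i - xstar = d - \<eta> *\<^sub>R v i" for i by (simp add: d_def algebra_simps)
  have nd: "(norm (d - \<eta> *\<^sub>R v i))\<^sup>2 = (norm d)\<^sup>2 - 2 * \<eta> * (d \<bullet> v i) + \<eta>\<^sup>2 * (norm (v i))\<^sup>2" for i
    by (simp add: norm_diff_sq power_mult_distrib)
  define V1 where "V1 = (1 / real n) * (\<Sum>i<n. d \<bullet> v i)"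
  define V2 where "V2 = (1 / real n) * (\<Sum>i<n. (norm (v i))\<^sup>2)"
  define HSx where "HSx = HS (\<lambda>_. x)"
  have part1: "(1 / real n) * (\<Sum>i<n. c * (norm (d - \<eta> *\<^sub>R v i))\<^sup>2) = c * ((norm d)\<^sup>2 - 2 * \<eta> * V1 + \<eta>\<^sup>2 * V2)"
    unfolding nd V1_def V2_def using n_gt
    by (simp add: sum.distrib sum_subtractf sum_distrib_left[symmetric] algebra_simps)
  have sv: "(\<Sum>i<n. v i) = (\<Sum>i<n. g i x)"
    unfolding v_def Ga_def using n_gt by (simp add: sum.distrib sum_subtractf sum_constant_scaleR)
  have "(\<Sum>i<n. d \<bullet> v i) = (\<Sum>i<n. g i x \<bullet> (x - xstar))"
    unfolding inner_sum_right[symmetric] sv d_def by (simp add: inner_sum_right inner_commute)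
  also have "\<dots> \<ge> (\<Sum>i<n. f i x - f i xstar)"
  proof (intro sum_mono)
    fix i assume "i \<in> {..<n}"
    then have "f i x + (g i x \<bullet> xstar - g i x \<bullet> x) \<le> f i xstar" using gi[of i x xstar] by (simp add: inner_diff_right)
    then show "f i x - f i xstar \<le> g i x \<bullet> (x - xstar)" by (simp add: inner_diff_right)
  qed
  finally have "(\<Sum>i<n. d \<bullet> v i) \<ge> real n * E"
    unfolding E_def F_def using n_gt by (simp add: sum_subtractf right_diff_distrib)
  then have V1: "V1 \<ge> E" unfolding V1_def using n_gt by (simp add: field_simps)
  define a where "a i = g i x - g i xstar" for i
  define u where "u i = g i (\<alpha> i) - g i xstar" for i
  have Gu: "Ga = (1 / real (card {..<n})) *\<^sub>R (\<Sum>j<n. u j)"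
    unfolding Ga_def u_def by (simp add: sum_subtractf gsum0)
  have vab: "v i = a i + (Ga - u i)" for i unfolding v_def a_def u_def by simp
  have "(\<Sum>i<n. (norm (v i))\<^sup>2) \<le> (\<Sum>i<n. (1 + \<beta>) * (norm (a i))\<^sup>2 + (1 + 1/\<beta>) * (norm (Ga - u i))\<^sup>2)"
    unfolding vab by (intro sum_mono young beta_pos)
  also have "\<dots> = (1 + \<beta>) * (\<Sum>i<n. (norm (a i))\<^sup>2) + (1 + 1/\<beta>) * (\<Sum>i<n. (norm (Ga - u i))\<^sup>2)"
    by (simp add: sum.distrib sum_distrib_left)
  also have "\<dots> \<le> (1 + \<beta>) * (2 * L * (real n * E)) + (1 + 1/\<beta>) * (2 * L * (real n * (HS \<alpha> + HN xt)))"
  proof (intro add_mono mult_left_mono)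
    have "(\<Sum>i<n. (norm (a i))\<^sup>2) \<le> (\<Sum>i<n. 2 * L * h i x)"
      unfolding a_def by (intro sum_mono coco) auto
    also have "\<dots> = 2 * L * (real n * E)" unfolding E_def by (simp add: sum_distrib_left[symmetric] sum_h)
    finally show "(\<Sum>i<n. (norm (a i))\<^sup>2) \<le> 2 * L * (real n * E)" .
    have "(\<Sum>i<n. (norm (Ga - u i))\<^sup>2) \<le> (\<Sum>i<n. (norm (u i))\<^sup>2)"
      unfolding Gu using variance[of "{..<n}" u] n_pos by simp
    also have "\<dots> \<le> (\<Sum>i<n. 2 * L * h i (\<alpha> i))"
      unfolding u_def by (intro sum_mono coco) auto
    also have "\<dots> = 2 * L * ((\<Sum>i\<in>S. h i (\<alpha> i)) + (\<Sum>i\<in>{..<n} - S. h i (\<alpha> i)))"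
      using S_sub by (simp add: sum_distrib_left[symmetric] sum.subset_diff[of S "{..<n}"] add.commute)
    also have "(\<Sum>i\<in>{..<n} - S. h i (\<alpha> i)) = (\<Sum>i\<in>{..<n} - S. h i xt)"
      using inv by (intro sum.cong) auto
    also have "2 * L * ((\<Sum>i\<in>S. h i (\<alpha> i)) + (\<Sum>i\<in>{..<n} - S. h i xt)) = 2 * L * (real n * (HS \<alpha> + HN xt))"
      unfolding HS_def HN_def using n_gt by (simp add: field_simps)
    finally show "(\<Sum>i<n. (norm (Ga - u i))\<^sup>2) \<le> 2 * L * (real n * (HS \<alpha> + HN xt))" .
  qed (use beta_pos in auto)
  finally have V2: "V2 \<le> 2*L*(1+\<beta>)*E + 2*L*(1+1/\<beta>)*(HS \<alpha> + HN xt)"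
    unfolding V2_def using n_gt by (simp add: field_simps)
  have hsup: "HS (\<alpha>(i := x)) = HS \<alpha> + (1 / real n) * (h i x - h i (\<alpha> i))" if i: "i \<in> S" for i
  proof -
    have "(\<Sum>j\<in>S. h j ((\<alpha>(i := x)) j)) = h i x + (\<Sum>j\<in>S - {i}. h j (\<alpha> j))"
      using i finS by (simp add: sum.remove)
    also have "\<dots> = (\<Sum>j\<in>S. h j (\<alpha> j)) + (h i x - h i (\<alpha> i))"
      using i finS by (simp add: sum.remove)
    finally have e: "(\<Sum>j\<in>S. h j ((\<alpha>(i := x)) j)) = (\<Sum>j\<in>S. h j (\<alpha> j)) + (h i x - h i (\<alpha> i))" .
    show ?thesis unfolding HS_def by (simp only: e distrib_left)
  qed
  have "(\<Sum>i<n. HS (if i \<in> S then \<alpha>(i := x) else \<alpha>)) =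
      (\<Sum>i\<in>S. HS \<alpha> + (1 / real n) * (h i x - h i (\<alpha> i))) + (\<Sum>i\<in>{..<n} - S. HS \<alpha>)"
    using S_sub by (simp add: sum.subset_diff[of S "{..<n}"] hsup add.commute)
  also have "\<dots> = real n * HS \<alpha> + HSx - HS \<alpha>"
  proof -
    have cS: "card ({..<n} - S) = n - card S" using S_sub finS by (simp add: card_Diff_subset)
    have cS2: "card S \<le> n" using S_sub by (metis card_lessThan card_mono finite_lessThan)
    have s1: "(\<Sum>i\<in>S. HS \<alpha> + (1 / real n) * (h i x - h i (\<alpha> i))) = real (card S) * HS \<alpha> + (HSx - HS \<alpha>)"
      unfolding HSx_def HS_def by (simp add: sum.distrib sum_subtractf sum_distrib_left[symmetric] right_diff_distrib sum_divide_distrib)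
    have s2: "(\<Sum>i\<in>{..<n} - S. HS \<alpha>) = (real n - real (card S)) * HS \<alpha>"
      using cS cS2 by (simp add: of_nat_diff)
    show ?thesis unfolding s1 s2 by (simp add: algebra_simps)
  qed
  finally have part2: "(1 / real n) * (\<Sum>i<n. HS (if i \<in> S then \<alpha>(i := x) else \<alpha>)) = (1 - 1 / real n) * HS \<alpha> + (1 / real n) * HSx"
    using n_gt by (simp add: field_simps)
  have HSx: "HSx \<le> E" using HS_HN[of x] HN_nonneg[of x] unfolding HSx_def E_def by linarith
  have Dl: "lam * (norm d)\<^sup>2 \<le> 2 * E" using F_sc[of x] unfolding d_def E_def by simp
  have "(1 / real n) * (\<Sum>i<n. (case hsag_update n g S \<eta> i x \<alpha> of (x', \<alpha>') \<Rightarrow> Phi x' \<alpha>'))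
      = (1 / real n) * (\<Sum>i<n. c * (norm (d - \<eta> *\<^sub>R v i))\<^sup>2) + (1 / real n) * (\<Sum>i<n. HS (if i \<in> S then \<alpha>(i := x) else \<alpha>))"
    unfolding upd Phi_def by (simp add: xd sum.distrib distrib_left)
  also have "\<dots> = c * ((norm d)\<^sup>2 - 2 * \<eta> * V1 + \<eta>\<^sup>2 * V2) + (1 - 1 / real n) * HS \<alpha> + (1 / real n) * HSx"
    unfolding part1 part2 by simp
  also have "\<dots> \<le> (1-1/\<kappa>)*(c*(norm d)\<^sup>2 + HS \<alpha>) - (2*c*\<eta>*(1 - L*\<eta>*(1+\<beta>)) - 1 / real n - 2*c/(\<kappa>*lam))*E + 2*L*c*\<eta>\<^sup>2*(1+1/\<beta>)*HN xt"
    by (rule step_arith[OF c_pos eta_pos L_nonneg beta_pos kappa_gt lam_pos V1 V2 HSx Dl cond HS_nonneg HN_nonneg])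
  also have "\<dots> = qq * Phi x \<alpha> - Ac * (F x - F xstar) + Bc * HN xt"
    unfolding qq_def Ac_def Bc_def Phi_def E_def d_def by simp
  finally show ?thesis .
qed

end



lemma exp_const_add:
  assumes "finite (set_pmf M)"
  shows "measure_pmf.expectation M (\<lambda>z. K + \<phi> z) = K + measure_pmf.expectation M (\<phi> :: _ \<Rightarrow> real)"
  using assms by (subst Bochner_Integration.integral_add) (auto intro: integrable_measure_pmf_finite)

lemma exp_mono:
  assumes "finite (set_pmf M)" "\<And>z. z \<in> set_pmf M \<Longrightarrow> \<phi> z \<le> \<psi> z"
  shows "measure_pmf.expectation M \<phi> \<le> measure_pmf.expectation M (\<psi> :: _ \<Rightarrow> real)"
proof -
  have "measure_pmf.expectation M \<phi> = (\<Sum>a\<in>set_pmf M. \<phi> a * pmf M a)"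
    by (rule integral_measure_pmf_real) (use assms in auto)
  also have "\<dots> \<le> (\<Sum>a\<in>set_pmf M. \<psi> a * pmf M a)"
    using assms by (intro sum_mono mult_right_mono) auto
  also have "\<dots> = measure_pmf.expectation M \<psi>"
    by (rule integral_measure_pmf_real[symmetric]) (use assms in auto)
  finally show ?thesis .
qed

lemma exp_bind_le:
  assumes "finite (set_pmf D)" "\<And>a. a \<in> set_pmf D \<Longrightarrow> finite (set_pmf (K a))"
    and "\<And>a. a \<in> set_pmf D \<Longrightarrow> measure_pmf.expectation (K a) hh \<le> u a"
  shows "measure_pmf.expectation (bind_pmf D K) (hh :: _ \<Rightarrow> real) \<le> measure_pmf.expectation D u"
proof -
  have "measure_pmf.expectation (bind_pmf D K) hh = (\<Sum>a\<in>set_pmf D. pmf D a *\<^sub>R measure_pmf.expectation (K a) hh)"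
    by (rule pmf_expectation_bind) (use assms in auto)
  also have "\<dots> \<le> (\<Sum>a\<in>set_pmf D. u a * pmf D a)"
  proof (intro sum_mono)
    fix a assume a: "a \<in> set_pmf D"
    have "pmf D a * measure_pmf.expectation (K a) hh \<le> pmf D a * u a"
      using assms(3)[OF a] by (intro mult_left_mono) auto
    then show "pmf D a *\<^sub>R measure_pmf.expectation (K a) hh \<le> u a * pmf D a" by (simp add: mult.commute)
  qed
  also have "\<dots> = measure_pmf.expectation D u"
    by (rule integral_measure_pmf_real[symmetric]) (use assms in auto)
  finally show ?thesis .
qed

lemma avg_lemma:
  fixes K a M :: real and P :: "nat \<Rightarrow> real"
  assumes "real n > 0"
  shows "(1 / real n) * (\<Sum>i<n. K + (a * P i + M)) = K + M + a * ((1 / real n) * (\<Sum>i<n. P i))"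
proof -
  have "(\<Sum>i<n. K + (a * P i + M)) = real n * K + a * (\<Sum>i<n. P i) + real n * M"
    by (simp add: sum.distrib sum_distrib_left[symmetric])
  then show ?thesis using assms by (simp add: field_simps)
qed

context hs2 begin

lemma qq_pos: "qq > 0" using kappa_gt unfolding qq_def by (simp add: field_simps)

lemma fin_run: "finite (set_pmf (hsag_run n g S \<eta> r x \<alpha>))"
proof (induction r arbitrary: x \<alpha>)
  case 0 then show ?case by simp
next
  case (Suc r)
  have ne: "{..<n} \<noteq> {}" using n_pos by (simp add: lessThan_empty_iff)
  show ?case using Suc ne by (auto split: prod.split)
qed

lemma run:
  assumes inv: "\<forall>i<n. i \<notin> S \<longrightarrow> \<alpha> i = xt"
  shows "measure_pmf.expectation (hsag_run n g S \<eta> r x \<alpha>)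
           (\<lambda>(xs, \<alpha>'). HS \<alpha>' + Ac * (\<Sum>j<r. qq ^ (r - 1 - j) * (F (xs ! j) - F xstar)))
         \<le> qq ^ r * Phi x \<alpha> + Bc * HN xt * (\<Sum>j<r. qq ^ j)"
  using inv
proof (induction r arbitrary: x \<alpha>)
  case 0
  then show ?case using c_pos by (simp add: Phi_def)
next
  case (Suc r)
  have ne: "{..<n} \<noteq> {}" using n_pos by (simp add: lessThan_empty_iff)
  define ff where "ff = (\<lambda>(xs, \<alpha>'). HS \<alpha>' + Ac * (\<Sum>j<Suc r. qq ^ (Suc r - 1 - j) * (F (xs ! j) - F xstar)))"
  define ih where "ih = (\<lambda>(xs, \<alpha>'). HS \<alpha>' + Ac * (\<Sum>j<r. qq ^ (r - 1 - j) * (F (xs ! j) - F xstar)))"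
  have one: "measure_pmf.expectation (case hsag_update n g S \<eta> i x \<alpha> of (x', \<alpha>') \<Rightarrow>
          map_pmf (\<lambda>(xs, \<alpha>''). (x # xs, \<alpha>'')) (hsag_run n g S \<eta> r x' \<alpha>')) ff
      \<le> Ac * qq ^ r * (F x - F xstar) + (qq ^ r * (case hsag_update n g S \<eta> i x \<alpha> of (x', \<alpha>') \<Rightarrow> Phi x' \<alpha>')
           + Bc * HN xt * (\<Sum>j<r. qq ^ j))" for i
  proof -
    obtain x' \<alpha>' where u: "hsag_update n g S \<eta> i x \<alpha> = (x', \<alpha>')" by fastforce
    have inv': "\<forall>j<n. j \<notin> S \<longrightarrow> \<alpha>' j = xt"
      using u Suc.prems unfolding hsag_update_def by (auto split: if_splits)
    have fc: "ff (x # xs, a) = Ac * qq ^ r * (F x - F xstar) + ih (xs, a)" for xs a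
    proof -
      have e: "(\<Sum>j<Suc r. qq ^ (Suc r - 1 - j) * (F ((x # xs) ! j) - F xstar))
          = qq ^ r * (F x - F xstar) + (\<Sum>j<r. qq ^ (r - 1 - j) * (F (xs ! j) - F xstar))"
        by (subst sum.lessThan_Suc_shift) simp
      show ?thesis unfolding ff_def ih_def prod.case e by (simp add: algebra_simps)
    qed
    have "measure_pmf.expectation (map_pmf (\<lambda>(xs, \<alpha>''). (x # xs, \<alpha>'')) (hsag_run n g S \<eta> r x' \<alpha>')) ff
        = measure_pmf.expectation (hsag_run n g S \<eta> r x' \<alpha>') (\<lambda>z. Ac * qq ^ r * (F x - F xstar) + ih z)"
      by (simp add: fc case_prod_unfold)
    also have "\<dots> = Ac * qq ^ r * (F x - F xstar) + measure_pmf.expectation (hsag_run n g S \<eta> r x' \<alpha>') ih"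
      by (rule exp_const_add[OF fin_run])
    also have "\<dots> \<le> Ac * qq ^ r * (F x - F xstar) + (qq ^ r * Phi x' \<alpha>' + Bc * HN xt * (\<Sum>j<r. qq ^ j))"
      using Suc.IH[OF inv'] unfolding ih_def by simp
    finally show ?thesis unfolding u by simp
  qed
  have "measure_pmf.expectation (hsag_run n g S \<eta> (Suc r) x \<alpha>) ff
      = (\<Sum>i<n. measure_pmf.expectation (case hsag_update n g S \<eta> i x \<alpha> of (x', \<alpha>') \<Rightarrow>
          map_pmf (\<lambda>(xs, \<alpha>''). (x # xs, \<alpha>'')) (hsag_run n g S \<eta> r x' \<alpha>')) ff /\<^sub>R real (card {..<n}))"
    by (simp only: hsag_run.simps, rule pmf_expectation_bind_pmf_of_set) (use ne fin_run in \<open>auto split: prod.split\<close>)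
  also have "\<dots> = (1 / real n) * (\<Sum>i<n. measure_pmf.expectation (case hsag_update n g S \<eta> i x \<alpha> of (x', \<alpha>') \<Rightarrow>
          map_pmf (\<lambda>(xs, \<alpha>''). (x # xs, \<alpha>'')) (hsag_run n g S \<eta> r x' \<alpha>')) ff)"
    by (simp add: sum_distrib_left divide_inverse mult.commute)
  also have "\<dots> \<le> (1 / real n) * (\<Sum>i<n. Ac * qq ^ r * (F x - F xstar) + (qq ^ r * (case hsag_update n g S \<eta> i x \<alpha> of (x', \<alpha>') \<Rightarrow> Phi x' \<alpha>')
           + Bc * HN xt * (\<Sum>j<r. qq ^ j)))"
    using n_gt by (intro mult_left_mono sum_mono one) auto
  also have "\<dots> = Ac * qq ^ r * (F x - F xstar) + Bc * HN xt * (\<Sum>j<r. qq ^ j)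
       + qq ^ r * ((1 / real n) * (\<Sum>i<n. (case hsag_update n g S \<eta> i x \<alpha> of (x', \<alpha>') \<Rightarrow> Phi x' \<alpha>')))"
    by (rule avg_lemma[OF n_gt])
  also have "\<dots> \<le> Ac * qq ^ r * (F x - F xstar) + Bc * HN xt * (\<Sum>j<r. qq ^ j)
       + qq ^ r * (qq * Phi x \<alpha> - Ac * (F x - F xstar) + Bc * HN xt)"
    using step[OF Suc.prems] qq_pos by (intro add_left_mono mult_left_mono) auto
  also have "\<dots> = qq ^ Suc r * Phi x \<alpha> + Bc * HN xt * (\<Sum>j<Suc r. qq ^ j)"
    by (simp add: algebra_simps)
  finally show ?case unfolding ff_def by simp
qed

end



lemma sum_rev_pow: "(\<Sum>l\<in>{1..m}. (x::real) ^ (m - l)) = (\<Sum>l<m. x ^ l)"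
proof (induction m)
  case 0 then show ?case by simp
next
  case (Suc m)
  have "(\<Sum>l\<in>{1..Suc m}. x ^ (Suc m - l)) = x ^ 0 + (\<Sum>l\<in>{1..m}. x ^ (Suc m - l))"
    by (simp add: atLeastAtMostSuc_conv)
  also have "(\<Sum>l\<in>{1..m}. x ^ (Suc m - l)) = x * (\<Sum>l\<in>{1..m}. x ^ (m - l))"
    by (simp add: sum_distrib_left Suc_diff_le)
  also have "x ^ 0 + x * (\<Sum>l\<in>{1..m}. x ^ (m - l)) = (\<Sum>l<Suc m. x ^ l)"
    unfolding Suc.IH by (subst sum.lessThan_Suc_shift) (simp add: sum_distrib_left)
  finally show ?case .
qed

lemma sum_mix:
  fixes X q :: "nat \<Rightarrow> real"
  shows "(\<Sum>j\<in>A. (\<gamma> * X j + H) * (q j / W)) = H * ((\<Sum>j\<in>A. q j) / W) + \<gamma> / W * (\<Sum>j\<in>A. q j * X j)"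
proof -
  have "(\<Sum>j\<in>A. (\<gamma> * X j + H) * (q j / W)) = (\<Sum>j\<in>A. H * (q j / W) + \<gamma> / W * (q j * X j))"
    by (intro sum.cong refl) (simp add: field_simps add_divide_distrib)
  also have "\<dots> = H * ((\<Sum>j\<in>A. q j) / W) + \<gamma> / W * (\<Sum>j\<in>A. q j * X j)"
    by (simp add: sum.distrib sum_distrib_left[symmetric] sum_divide_distrib[symmetric])
  finally show ?thesis .
qed

lemma sum_shift1: "(\<Sum>j\<in>{1..m}. (a j :: real)) = (\<Sum>j<m. a (Suc j))"
  by (induction m) (simp_all add: atLeastAtMostSuc_conv)

locale hs3 = hs2 f g n S L lam xstar c \<beta> \<kappa> \<eta>
  for f :: "nat \<Rightarrow> 'a::euclidean_space \<Rightarrow> real" and g n S L lam xstar c \<beta> \<kappa> \<eta> +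
  fixes m :: nat and p :: "nat pmf" and \<gamma> \<theta> :: real
  assumes m_pos: "m \<ge> 1"
    and gamma_def: "\<gamma> = \<kappa> * (1 - (1 - 1/\<kappa>) ^ m) *
          (2 * c * \<eta> * (1 - L * \<eta> * (1 + \<beta>)) - 1 / real n - 2 * c / (\<kappa> * lam))"
    and theta_def: "\<theta> = max (2 * c / (\<gamma> * lam) * (1 - 1/\<kappa>) ^ m
          + 2 * L * c * \<eta>\<^sup>2 / \<gamma> * (1 + 1/\<beta>) * \<kappa> * (1 - (1 - 1/\<kappa>) ^ m))
          ((1 - 1/\<kappa>) ^ m)"
    and gamma_pos: "\<gamma> > 0"
    and p_def: "\<And>j. pmf p j = (if 1 \<le> j \<and> j \<le> m
          then (1 - 1/\<kappa>) ^ (m - j) / (\<Sum>l\<in>{1..m}. (1 - 1/\<kappa>) ^ (m - l)) else 0)"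
begin

definition "W = (\<Sum>l\<in>{1..m}. qq ^ (m - l))"
definition "V st = \<gamma> * (F (fst st) - F xstar) + HS (snd st)"

lemma W_eq: "W = \<kappa> * (1 - qq ^ m)"
proof -
  have "qq \<noteq> 1" using kappa_gt unfolding qq_def by simp
  then have "W = (1 - qq ^ m) / (1 - qq)" unfolding W_def sum_rev_pow by (simp add: sum_gp_strict)
  also have "1 - qq = 1 / \<kappa>" unfolding qq_def by simp
  finally show ?thesis by simp
qed

lemma qqm: "qq ^ m < 1" "qq ^ m \<ge> 0"
proof -
  have "qq < 1" using kappa_gt unfolding qq_def by simp
  then show "qq ^ m < 1" using qq_pos m_pos by (simp add: power_less_one_iff)
  show "qq ^ m \<ge> 0" using qq_pos by simp
qed

lemma W_pos: "W > 0" unfolding W_eq using qqm kappa_gt by simp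

lemma Ac_eq: "\<gamma> = W * Ac" unfolding gamma_def W_eq Ac_def qq_def by simp

lemma pmf_p: "pmf p j = (if j \<in> {1..m} then qq ^ (m - j) / W else 0)"
  unfolding p_def W_def qq_def by simp

lemma set_p: "set_pmf p \<subseteq> {1..m}"
  using pmf_p by (auto simp: set_pmf_eq split: if_splits)

lemma fin_p: "finite (set_pmf p)" using set_p finite_subset by blast

lemma exp_p: "measure_pmf.expectation p \<phi> = (\<Sum>j\<in>{1..m}. \<phi> j * (qq ^ (m - j) / W))"
proof -
  have "measure_pmf.expectation p \<phi> = (\<Sum>j\<in>{1..m}. \<phi> j * pmf p j)"
    by (rule integral_measure_pmf_real) (use set_p in auto)
  then show ?thesis by (simp add: pmf_p)
qed

lemma theta_ge: "\<theta> \<ge> qq ^ m" "\<theta> * \<gamma> \<ge> 2 * c * qq ^ m / lam + Bc * W"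
proof -
  show "\<theta> \<ge> qq ^ m" unfolding theta_def qq_def by simp
  have "\<theta> \<ge> 2 * c / (\<gamma> * lam) * qq ^ m + Bc * W / \<gamma>"
    unfolding theta_def W_eq Bc_def qq_def by (simp add: algebra_simps)
  then have "\<theta> * \<gamma> \<ge> (2 * c / (\<gamma> * lam) * qq ^ m + Bc * W / \<gamma>) * \<gamma>"
    using gamma_pos by (intro mult_right_mono) auto
  also have "(2 * c / (\<gamma> * lam) * qq ^ m + Bc * W / \<gamma>) * \<gamma> = 2 * c * qq ^ m / lam + Bc * W"
    using gamma_pos lam_pos by (simp add: field_simps)
  finally show "\<theta> * \<gamma> \<ge> 2 * c * qq ^ m / lam + Bc * W" .
qed

lemma Bc_nonneg: "Bc \<ge> 0" unfolding Bc_def using L_nonneg c_pos beta_pos by simp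

lemma fin_epoch: "finite (set_pmf (hsag_epoch n g S \<eta> m p st))"
  unfolding hsag_epoch_def using fin_run fin_p by (auto split: prod.split)

lemma epoch: "measure_pmf.expectation (hsag_epoch n g S \<eta> m p (xt, \<alpha>)) V \<le> \<theta> * V (xt, \<alpha>)"
proof -
  define \<alpha>0 where "\<alpha>0 = (\<lambda>i. if i \<in> S then \<alpha> i else xt)"
  have inv: "\<forall>i<n. i \<notin> S \<longrightarrow> \<alpha>0 i = xt" unfolding \<alpha>0_def by simp
  have HS0: "HS \<alpha>0 = HS \<alpha>" unfolding HS_def \<alpha>0_def by simp
  define E where "E = F xt - F xstar"
  have inner: "measure_pmf.expectation (map_pmf (\<lambda>j. (xs ! (j - 1), \<alpha>')) p) V
      = HS \<alpha>' + Ac * (\<Sum>j<m. qq ^ (m - 1 - j) * (F (xs ! j) - F xstar))" for xs \<alpha>'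
  proof -
    have "measure_pmf.expectation (map_pmf (\<lambda>j. (xs ! (j - 1), \<alpha>')) p) V
        = (\<Sum>j\<in>{1..m}. (\<gamma> * (F (xs ! (j - 1)) - F xstar) + HS \<alpha>') * (qq ^ (m - j) / W))"
      by (simp add: exp_p V_def)
    also have "\<dots> = HS \<alpha>' * ((\<Sum>j\<in>{1..m}. qq ^ (m - j)) / W)
        + (\<gamma> / W) * (\<Sum>j\<in>{1..m}. qq ^ (m - j) * (F (xs ! (j - 1)) - F xstar))"
      by (rule sum_mix)
    also have "(\<Sum>j\<in>{1..m}. qq ^ (m - j)) / W = 1" using W_pos unfolding W_def by simp
    also have "\<gamma> / W = Ac" using W_pos unfolding Ac_eq by simp
    also have "(\<Sum>j\<in>{1..m}. qq ^ (m - j) * (F (xs ! (j - 1)) - F xstar))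
        = (\<Sum>j<m. qq ^ (m - 1 - j) * (F (xs ! j) - F xstar))"
      unfolding sum_shift1 by simp
    finally show ?thesis by simp
  qed
  have "measure_pmf.expectation (hsag_epoch n g S \<eta> m p (xt, \<alpha>)) V
      \<le> measure_pmf.expectation (hsag_run n g S \<eta> m xt \<alpha>0)
           (\<lambda>(xs, \<alpha>'). HS \<alpha>' + Ac * (\<Sum>j<m. qq ^ (m - 1 - j) * (F (xs ! j) - F xstar)))"
    unfolding hsag_epoch_def prod.case \<alpha>0_def[symmetric]
    by (rule exp_bind_le) (use fin_run fin_p inner in \<open>auto split: prod.split\<close>)
  also have "\<dots> \<le> qq ^ m * Phi xt \<alpha>0 + Bc * HN xt * (\<Sum>j<m. qq ^ j)"
    by (rule run[OF inv])
  also have "\<dots> = qq ^ m * c * (norm (xt - xstar))\<^sup>2 + qq ^ m * HS \<alpha> + Bc * W * HN xt"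
    unfolding Phi_def HS0 W_def sum_rev_pow by (simp add: algebra_simps)
  also have "\<dots> \<le> \<theta> * V (xt, \<alpha>)"
  proof -
    have D: "(norm (xt - xstar))\<^sup>2 \<le> 2 * E / lam" using F_sc[of xt] lam_pos unfolding E_def by (simp add: field_simps)
    have HN: "HN xt \<le> E" using HS_HN[of xt] HS_nonneg[of "\<lambda>_. xt"] unfolding E_def by linarith
    have E0: "E \<ge> 0" using HN HN_nonneg[of xt] by linarith
    have a1: "qq ^ m * c * (norm (xt - xstar))\<^sup>2 \<le> qq ^ m * c * (2 * E / lam)"
      using D qqm c_pos by (intro mult_left_mono) auto
    have a2: "Bc * W * HN xt \<le> Bc * W * E" using HN Bc_nonneg W_pos by (intro mult_left_mono) auto
    have a3: "qq ^ m * HS \<alpha> \<le> \<theta> * HS \<alpha>" using theta_ge(1) HS_nonneg by (intro mult_right_mono) auto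
    have a4: "(2 * c * qq ^ m / lam + Bc * W) * E \<le> (\<theta> * \<gamma>) * E" using theta_ge(2) E0 by (intro mult_right_mono) auto
    have a5: "qq ^ m * c * (2 * E / lam) + Bc * W * E = (2 * c * qq ^ m / lam + Bc * W) * E"
      by (simp add: algebra_simps)
    have v: "\<theta> * V (xt, \<alpha>) = (\<theta> * \<gamma>) * E + \<theta> * HS \<alpha>" unfolding V_def E_def by (simp add: algebra_simps)
    show ?thesis unfolding v using a1 a2 a3 a4 a5 by linarith
  qed
  finally show ?thesis .
qed

end



context hs3 begin

lemma state_Suc: "hsag_state n g S \<eta> m p x0 (Suc k) = bind_pmf (hsag_state n g S \<eta> m p x0 k) (hsag_epoch n g S \<eta> m p)"
  unfolding hsag_state_def by simp

lemma fin_state: "finite (set_pmf (hsag_state n g S \<eta> m p x0 k))"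
proof (induction k)
  case 0 then show ?case by (simp add: hsag_state_def)
next
  case (Suc k) then show ?case unfolding state_Suc using fin_epoch by simp
qed

lemma theta_nonneg: "\<theta> \<ge> 0" using theta_ge(1) qqm(2) by linarith

lemma state_V: "measure_pmf.expectation (hsag_state n g S \<eta> m p x0 k) V \<le> \<theta> ^ k * V (x0, \<lambda>_. x0)"
proof (induction k)
  case 0 then show ?case by (simp add: hsag_state_def)
next
  case (Suc k)
  have "measure_pmf.expectation (hsag_state n g S \<eta> m p x0 (Suc k)) V
      \<le> measure_pmf.expectation (hsag_state n g S \<eta> m p x0 k) (\<lambda>st. \<theta> * V st)"
    unfolding state_Suc
  proof (rule exp_bind_le[OF fin_state fin_epoch])
    fix st :: "'a \<times> (nat \<Rightarrow> 'a)"
    obtain a b where st: "st = (a, b)" by fastforce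
    show "measure_pmf.expectation (hsag_epoch n g S \<eta> m p st) V \<le> \<theta> * V st"
      unfolding st by (rule epoch)
  qed
  also have "\<dots> = \<theta> * measure_pmf.expectation (hsag_state n g S \<eta> m p x0 k) V" by simp
  also have "\<dots> \<le> \<theta> * (\<theta> ^ k * V (x0, \<lambda>_. x0))" using Suc theta_nonneg by (intro mult_left_mono) auto
  finally show ?case by simp
qed

lemma final: "measure_pmf.expectation (hsag_state n g S \<eta> m p x0 k) (\<lambda>st. F (fst st) - F xstar)
   \<le> (\<theta> * (1 + 1/\<gamma>)) ^ k * (F x0 - F xstar)"
proof (cases k)
  case 0 then show ?thesis by (simp add: hsag_state_def)
next
  case (Suc k')
  define D where "D = hsag_state n g S \<eta> m p x0 k"
  define X where "X = measure_pmf.expectation D (\<lambda>st. F (fst st) - F xstar)"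
  have fD: "finite (set_pmf D)" unfolding D_def by (rule fin_state)
  have "measure_pmf.expectation D V = \<gamma> * X + measure_pmf.expectation D (\<lambda>st. HS (snd st))"
    unfolding V_def[abs_def] X_def using fD
    by (subst Bochner_Integration.integral_add) (auto intro: integrable_measure_pmf_finite)
  moreover have "measure_pmf.expectation D (\<lambda>st. HS (snd st)) \<ge> 0"
    by (rule Bochner_Integration.integral_nonneg) (simp add: HS_nonneg)
  moreover have "measure_pmf.expectation D V \<le> \<theta> ^ k * V (x0, \<lambda>_. x0)" unfolding D_def by (rule state_V)
  moreover have "V (x0, \<lambda>_. x0) \<le> (\<gamma> + 1) * (F x0 - F xstar)"
    using HS_HN[of x0] HN_nonneg[of x0] unfolding V_def by (simp add: algebra_simps)
  ultimately have "\<gamma> * X \<le> \<theta> ^ k * ((\<gamma> + 1) * (F x0 - F xstar))"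
    using theta_nonneg by (smt (verit) mult_left_mono zero_le_power)
  then have "X \<le> \<theta> ^ k * (1 + 1/\<gamma>) * (F x0 - F xstar)"
    using gamma_pos by (simp add: field_simps)
  also have "\<dots> \<le> \<theta> ^ k * (1 + 1/\<gamma>) ^ k * (F x0 - F xstar)"
  proof -
    have E0: "F x0 - F xstar \<ge> 0" using opt unfolding F_def by simp
    have "(1 + 1/\<gamma>) \<le> (1 + 1/\<gamma>) ^ k" using gamma_pos Suc by (intro self_le_power) auto
    then show ?thesis using E0 theta_nonneg by (intro mult_right_mono mult_left_mono) auto
  qed
  finally show ?thesis unfolding X_def D_def by (simp add: power_mult_distrib)
qed

end

theorem corollary1:
  fixes f :: "nat \<Rightarrow> 'a::euclidean_space \<Rightarrow> real"
    and g :: "nat \<Rightarrow> 'a \<Rightarrow> 'a"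
    and n m :: nat and S :: "nat set"
    and L lam c \<beta> \<kappa> \<eta> \<gamma> \<theta> :: real
    and xstar x0 :: 'a and p :: "nat pmf" and k :: nat
  assumes n_pos: "n \<ge> 1"
    and S_sub: "S \<subseteq> {..<n}"
    and conv: "\<And>i. i < n \<Longrightarrow> convex_on UNIV (f i)"
    and grad: "\<And>i x. i < n \<Longrightarrow> (f i has_derivative (\<lambda>h. g i x \<bullet> h)) (at x)"
    and lip: "\<And>i x y. i < n \<Longrightarrow> norm (g i x - g i y) \<le> L * norm (x - y)"
    and lam_pos: "lam > 0"
    and sc: "strongly_convex lam (\<lambda>x. (1 / real n) * (\<Sum>i<n. f i x))"
    and opt: "\<And>y. (1 / real n) * (\<Sum>i<n. f i xstar) \<le> (1 / real n) * (\<Sum>i<n. f i y)"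
    and c_pos: "c > 0" and beta_pos: "\<beta> > 0" and kappa_gt: "\<kappa> > 1"
    and eta_pos: "\<eta> > 0" and m_pos: "m \<ge> 1"
    and gamma_def: "\<gamma> = \<kappa> * (1 - (1 - 1/\<kappa>) ^ m) *
          (2 * c * \<eta> * (1 - L * \<eta> * (1 + \<beta>)) - 1 / real n - 2 * c / (\<kappa> * lam))"
    and theta_def: "\<theta> = max (2 * c / (\<gamma> * lam) * (1 - 1/\<kappa>) ^ m
          + 2 * L * c * \<eta>\<^sup>2 / \<gamma> * (1 + 1/\<beta>) * \<kappa> * (1 - (1 - 1/\<kappa>) ^ m))
          ((1 - 1/\<kappa>) ^ m)"
    and cond: "1/\<kappa> + 2 * L * c * \<eta>\<^sup>2 * (1 + 1/\<beta>) \<le> 1 / real n"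
    and gamma_pos: "\<gamma> > 0" and theta_lt: "\<theta> < 1"
    and p_def: "\<And>j. pmf p j = (if 1 \<le> j \<and> j \<le> m
          then (1 - 1/\<kappa>) ^ (m - j) / (\<Sum>l\<in>{1..m}. (1 - 1/\<kappa>) ^ (m - l)) else 0)"
    and thetabar_lt: "\<theta> * (1 + 1/\<gamma>) < 1"
  shows "measure_pmf.expectation (hsag_state n g S \<eta> m p x0 k)
           (\<lambda>st. (1 / real n) * (\<Sum>i<n. f i (fst st)) - (1 / real n) * (\<Sum>i<n. f i xstar))
         \<le> (\<theta> * (1 + 1/\<gamma>)) ^ k *
           ((1 / real n) * (\<Sum>i<n. f i x0) - (1 / real n) * (\<Sum>i<n. f i xstar))"
proof -
  interpret hs3 f g n S L lam xstar c \<beta> \<kappa> \<eta> m p \<gamma> \<theta>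
    by (unfold_locales; (rule n_pos S_sub conv grad lip lam_pos sc opt c_pos beta_pos kappa_gt eta_pos cond m_pos gamma_def theta_def gamma_pos p_def | assumption)+)
  show ?thesis using final[of x0 k] unfolding F_def by simp
qed

end
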